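(* Let $n\ge0$. For every $m\ge0$, in $OPol_{n+1}$: (1) $x_{n+1}^{m+n+1}=-\sum_{q=0}^n\Big(\sum_{r=0}^m(-1)^{m+n+1-q-r}h_r^{(n+1)}e^{(n+1)}_{m+n+1-q-r}\Big)x_{n+1}^q$; (2) $x_1^{m+n+1}=-\sum_{p=0}^nx_1^p\Big(\sum_{s=0}^m(-1)^{m+n+1-p-s}e^{(n+1)}_{m+n+1-p-s}h^{(n+1)}_s\Big)$.
   Context: $\Bbbk$ is a field of characteristic $\neq2$. $OPol_N$ is the graded superalgebra generated by odd degree-2 elements $x_1,\dots,x_N$ with $x_jx_i=-x_ix_j$ ($i\ne j$). $e_r^{(N)}:=\sum_{1\le i_1<\cdots<i_r\le N}x_{i_1}\cdots x_{i_r}$ (zero for $r>N$) and $h_r^{(N)}:=\sum_{N\ge i_r\ge\cdots\ge i_1\ge1}x_{i_r}\cdots x_{i_1}$, with $e^{(N)}_0=h^{(N)}_0=1$. *)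

theory Defs
  imports Main "HOL-Library.Function_Algebras"
begin

text \<open>Concrete model of the odd polynomial superalgebra OPol_N over a field:
  an element is a coefficient function on exponent vectors (nat => nat); the
  (ordered) monomial with exponent vector a stands for x_1^(a 1) ... x_N^(a N).
  These ordered monomials form a basis of OPol_N, and the product is
  x^a * x^b = (-1)^(sum_{j<i} a_i b_j) x^(a+b), which is exactly the rule forced by
  x_j x_i = - x_i x_j for i ~= j (no relation on squares).\<close>

type_synonym 'a opol = "(nat \<Rightarrow> nat) \<Rightarrow> 'a"

definition mon_ok :: "nat \<Rightarrow> (nat \<Rightarrow> nat) \<Rightarrow> bool" where
  "mon_ok N a \<longleftrightarrow> (\<forall>i. a i \<noteq> 0 \<longrightarrow> i \<in> {1..N})"

definition op_sign :: "nat \<Rightarrow> (nat \<Rightarrow> nat) \<Rightarrow> (nat \<Rightarrow> nat) \<Rightarrow> 'a::comm_ring_1" where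
  "op_sign N a b = (-1) ^ (\<Sum>i\<in>{1..N}. \<Sum>j\<in>{1..<i}. a i * b j)"

definition opmul :: "nat \<Rightarrow> 'a::comm_ring_1 opol \<Rightarrow> 'a opol \<Rightarrow> 'a opol" where
  "opmul N f g = (\<lambda>c. if mon_ok N c then
      (\<Sum>a\<in>{a. mon_ok N a \<and> (\<forall>i. a i \<le> c i)}.
          op_sign N a (\<lambda>i. c i - a i) * f a * g (\<lambda>i. c i - a i))
    else 0)"

definition opone :: "'a::comm_ring_1 opol" where
  "opone = (\<lambda>c. if c = (\<lambda>_. 0) then 1 else 0)"

definition opvar :: "nat \<Rightarrow> 'a::comm_ring_1 opol" where
  "opvar i = (\<lambda>c. if c = (\<lambda>j. if j = i then 1 else 0) then 1 else 0)"

definition opscale :: "'a::comm_ring_1 \<Rightarrow> 'a opol \<Rightarrow> 'a opol" where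
  "opscale k f = (\<lambda>c. k * f c)"

definition oppow :: "nat \<Rightarrow> 'a::comm_ring_1 opol \<Rightarrow> nat \<Rightarrow> 'a opol" where
  "oppow N f k = (opmul N f ^^ k) opone"

definition opprod :: "nat \<Rightarrow> 'a::comm_ring_1 opol list \<Rightarrow> 'a opol" where
  "opprod N fs = foldr (opmul N) fs opone"

definition op_e :: "nat \<Rightarrow> nat \<Rightarrow> 'a::comm_ring_1 opol" where
  "op_e N r = (\<Sum>S\<in>{S. S \<subseteq> {1..N} \<and> card S = r}.
      opprod N (map opvar (sorted_list_of_set S)))"

definition op_h :: "nat \<Rightarrow> nat \<Rightarrow> 'a::comm_ring_1 opol" where
  "op_h N r = (\<Sum>xs\<in>{xs. length xs = r \<and> sorted xs \<and> set xs \<subseteq> {1..N}}.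
      opprod N (map opvar (rev xs)))"

end

theory Submission
  imports Defs
begin



lemma sum_fun_apply: "(\<Sum>i\<in>I. F i) c = (\<Sum>i\<in>I. F i c)"
  by (induct I rule: infinite_finite_induct) auto

definition okp :: "nat \<Rightarrow> 'a::comm_ring_1 opol \<Rightarrow> bool" where
  "okp N f \<longleftrightarrow> (\<forall>c. \<not> mon_ok N c \<longrightarrow> f c = 0)"

definition LE :: "nat \<Rightarrow> (nat\<Rightarrow>nat) \<Rightarrow> (nat\<Rightarrow>nat) set" where
  "LE N c = {a. mon_ok N a \<and> (\<forall>i. a i \<le> c i)}"

lemma finite_LE: "finite (LE N c)"
proof -
  have "LE N c \<subseteq> {f. \<forall>x. (x \<in> {1..N} \<longrightarrow> f x \<in> {0..(\<Sum>i\<in>{1..N}. c i)}) \<and> (x \<notin> {1..N} \<longrightarrow> f x = 0)}"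
  proof safe
    fix a x assume a: "a \<in> LE N c" and x: "x \<in> {1..N}"
    have "a x \<le> c x" using a by (auto simp: LE_def)
    also have "c x \<le> (\<Sum>i\<in>{1..N}. c i)" using x by (intro member_le_sum) auto
    finally show "a x \<in> {0..(\<Sum>i\<in>{1..N}. c i)}" by simp
  next
    fix a x assume a: "a \<in> LE N c" and x: "x \<notin> {1..N}"
    then show "a x = 0" by (auto simp: LE_def mon_ok_def)
  qed
  then show ?thesis by (rule finite_subset) (intro finite_set_of_finite_funs, auto)
qed

lemma opmul_eq: "opmul N f g c = (if mon_ok N c then
   (\<Sum>a\<in>LE N c. op_sign N a (\<lambda>i. c i - a i) * f a * g (\<lambda>i. c i - a i)) else 0)"
  by (simp add: opmul_def LE_def)

lemma okp_opmul[simp]: "okp N (opmul N f g)"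
  by (simp add: okp_def opmul_def)

lemma okp_opone[simp]: "okp N opone"
  by (simp add: okp_def opone_def mon_ok_def)

lemma okp_add[simp]: "okp N f \<Longrightarrow> okp N g \<Longrightarrow> okp N (f + g)"
  by (simp add: okp_def)
lemma okp_diff[simp]: "okp N f \<Longrightarrow> okp N g \<Longrightarrow> okp N (f - g)"
  by (simp add: okp_def)
lemma okp_uminus[simp]: "okp N f \<Longrightarrow> okp N (- f)"
  by (simp add: okp_def)
lemma okp_zero[simp]: "okp N 0"
  by (simp add: okp_def)
lemma okp_scale[simp]: "okp N f \<Longrightarrow> okp N (opscale k f)"
  by (simp add: okp_def opscale_def)
lemma okp_sum[simp]: "(\<And>i. i \<in> I \<Longrightarrow> okp N (F i)) \<Longrightarrow> okp N (\<Sum>i\<in>I. F i)"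
  by (induct I rule: infinite_finite_induct) auto
lemma okp_opvar[simp]: "i \<in> {1..N} \<Longrightarrow> okp N (opvar i)"
  by (auto simp: okp_def opvar_def mon_ok_def)
lemma okp_oppow[simp]: "okp N (oppow N f k)"
  by (cases k) (auto simp: oppow_def)
lemma okp_opprod[simp]: "okp N (opprod N fs)"
  by (cases fs) (auto simp: opprod_def)

lemma op_sign_add1: "op_sign N (\<lambda>i. a i + b i) c = (op_sign N a c * op_sign N b c :: 'a::comm_ring_1)"
  by (simp add: op_sign_def algebra_simps sum.distrib power_add)
lemma op_sign_add2: "op_sign N c (\<lambda>i. a i + b i) = (op_sign N c a * op_sign N c b :: 'a::comm_ring_1)"
  by (simp add: op_sign_def algebra_simps sum.distrib power_add)
lemma op_sign_zero1: "op_sign N (\<lambda>_. 0) c = 1"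
  by (simp add: op_sign_def)
lemma op_sign_zero2: "op_sign N c (\<lambda>_. 0) = 1"
  by (simp add: op_sign_def)

lemma mon_ok_le: "mon_ok N c \<Longrightarrow> (\<forall>i. a i \<le> c i) \<Longrightarrow> mon_ok N a"
  unfolding mon_ok_def by (metis le_zero_eq)

lemma LE_iff: "mon_ok N c \<Longrightarrow> a \<in> LE N c \<longleftrightarrow> (\<forall>i. a i \<le> c i)"
  using mon_ok_le by (auto simp: LE_def)

lemma mon_ok_diff: "mon_ok N c \<Longrightarrow> mon_ok N (\<lambda>i. c i - a i)"
  by (auto simp: mon_ok_def)




lemma opmul_assoc: "opmul N (opmul N f g) h = opmul N f (opmul N g h)"
proof (rule ext)
  fix c :: "nat \<Rightarrow> nat"
  show "opmul N (opmul N f g) h c = opmul N f (opmul N g h) c"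
  proof (cases "mon_ok N c")
    case False then show ?thesis by (simp add: opmul_eq)
  next
    case c: True
    define sg where "sg = (op_sign N :: _ \<Rightarrow> _ \<Rightarrow> 'a)"
    let ?m = "\<lambda>x y. (\<lambda>i. x i - y i :: nat)"
    let ?S = "SIGMA a:LE N c. LE N a"
    let ?T = "SIGMA b:LE N c. LE N (?m c b)"
    have L: "opmul N (opmul N f g) h c = (\<Sum>(a,b)\<in>?S. sg a (?m c a) * sg b (?m a b) * f b * g (?m a b) * h (?m c a))"
    proof -
      have "opmul N (opmul N f g) h c = (\<Sum>a\<in>LE N c. \<Sum>b\<in>LE N a. sg a (?m c a) * sg b (?m a b) * f b * g (?m a b) * h (?m c a))"
        unfolding opmul_eq[of N _ h] using c
        apply simp
        apply (rule sum.cong, simp)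
        apply (subst opmul_eq)
        apply (auto simp: LE_def sum_distrib_left sum_distrib_right sg_def mult.assoc)
        done
      also have "\<dots> = (\<Sum>(a,b)\<in>?S. sg a (?m c a) * sg b (?m a b) * f b * g (?m a b) * h (?m c a))"
        by (rule sum.Sigma) (auto simp: finite_LE)
      finally show ?thesis .
    qed
    have R: "opmul N f (opmul N g h) c = (\<Sum>(b,d)\<in>?T. sg b (?m c b) * sg d (?m (?m c b) d) * f b * g d * h (?m (?m c b) d))"
    proof -
      have "opmul N f (opmul N g h) c = (\<Sum>b\<in>LE N c. \<Sum>d\<in>LE N (?m c b). sg b (?m c b) * sg d (?m (?m c b) d) * f b * g d * h (?m (?m c b) d))"
        unfolding opmul_eq[of N f] using c
        apply simp
        apply (rule sum.cong, simp)
        apply (subst opmul_eq)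
        apply (auto simp: mon_ok_diff sum_distrib_left sum_distrib_right sg_def mult_ac)
        done
      also have "\<dots> = (\<Sum>(b,d)\<in>?T. sg b (?m c b) * sg d (?m (?m c b) d) * f b * g d * h (?m (?m c b) d))"
        by (rule sum.Sigma) (auto simp: finite_LE)
      finally show ?thesis .
    qed
    have "(\<Sum>(a,b)\<in>?S. sg a (?m c a) * sg b (?m a b) * f b * g (?m a b) * h (?m c a))
        = (\<Sum>(b,d)\<in>?T. sg b (?m c b) * sg d (?m (?m c b) d) * f b * g d * h (?m (?m c b) d))"
    proof (rule sum.reindex_bij_witness[where i="\<lambda>(b,d). (\<lambda>i. b i + d i, b)" and j="\<lambda>(a,b). (b, ?m a b)"])
      fix p assume p: "p \<in> ?S"
      obtain a b where ab: "p = (a,b)" by force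
      from p ab c have ac: "\<forall>i. a i \<le> c i" and ba: "\<forall>i. b i \<le> a i" and ma: "mon_ok N a"
        by (auto simp: LE_def)
      show "(case case p of (a, b) \<Rightarrow> (b, ?m a b) of (b, d) \<Rightarrow> (\<lambda>i. b i + d i, b)) = p"
        using ab ba by (auto simp: fun_eq_iff)
      have bc: "\<forall>i. b i \<le> c i" using ba ac le_trans by blast
      show "(case p of (a, b) \<Rightarrow> (b, ?m a b)) \<in> ?T"
        using ab ba ac bc c ma p by (auto simp: LE_def mon_ok_diff intro: mon_ok_le[OF c] mon_ok_le[OF ma] diff_le_mono)
      have e1: "?m (?m c b) (?m a b) = ?m c a" using ac ba by (auto simp: fun_eq_iff)
      have e2: "a = (\<lambda>i. b i + ?m a b i)" using ba by (auto simp: fun_eq_iff)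
      have e3: "?m c b = (\<lambda>i. ?m a b i + ?m c a i)" using ba ac by (auto simp: fun_eq_iff)
      have "sg a (?m c a) * sg b (?m a b) = sg b (?m c b) * sg (?m a b) (?m c a)"
        apply (subst (1) e2) apply (subst e3)
        by (simp add: sg_def op_sign_add1 op_sign_add2 mult_ac)
      then show "(case case p of (a, b) \<Rightarrow> (b, ?m a b) of (b, d) \<Rightarrow> sg b (?m c b) * sg d (?m (?m c b) d) * f b * g d * h (?m (?m c b) d))
          = (case p of (a, b) \<Rightarrow> sg a (?m c a) * sg b (?m a b) * f b * g (?m a b) * h (?m c a))"
        using ab e1 by (simp add: mult_ac)
    next
      fix q assume q: "q \<in> ?T"
      obtain b d where bd: "q = (b,d)" by force
      from q bd c have bc: "\<forall>i. b i \<le> c i" and dc: "\<forall>i. d i \<le> c i - b i" and mb: "mon_ok N b" and md: "mon_ok N d"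
        by (auto simp: LE_def)
      show "(case case q of (b, d) \<Rightarrow> (\<lambda>i. b i + d i, b) of (a, b) \<Rightarrow> (b, ?m a b)) = q"
        using bd by (auto simp: fun_eq_iff)
      have "\<forall>i. b i + d i \<le> c i" using bc dc by (metis le_diff_conv2 add.commute)
      then show "(case q of (b, d) \<Rightarrow> (\<lambda>i. b i + d i, b)) \<in> ?S"
        using bd c mb by (auto simp: LE_def intro: mon_ok_le[OF c])
    qed
    then show ?thesis using L R by simp
  qed
qed




lemma opmul_add_left: "opmul N (f + g) h = opmul N f h + opmul N g h"
  by (rule ext) (simp add: opmul_eq sum.distrib[symmetric] algebra_simps)
lemma opmul_add_right: "opmul N h (f + g) = opmul N h f + opmul N h g"
  by (rule ext) (simp add: opmul_eq sum.distrib[symmetric] algebra_simps)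
lemma opmul_zero_left[simp]: "opmul N 0 g = 0"
  by (rule ext) (simp add: opmul_eq)
lemma opmul_zero_right[simp]: "opmul N g 0 = 0"
  by (rule ext) (simp add: opmul_eq)
lemma opmul_uminus_left: "opmul N (- f) h = - opmul N f h"
  by (rule ext) (simp add: opmul_eq sum_negf[symmetric])
lemma opmul_uminus_right: "opmul N h (- f) = - opmul N h f"
  by (rule ext) (simp add: opmul_eq sum_negf[symmetric])
lemma opmul_diff_left: "opmul N (f - g) h = opmul N f h - opmul N g h"
  using opmul_add_left[of N f "-g" h] by (simp add: opmul_uminus_left)
lemma opmul_diff_right: "opmul N h (f - g) = opmul N h f - opmul N h g"
  using opmul_add_right[of N h f "-g"] by (simp add: opmul_uminus_right)
lemma opmul_scale_left: "opmul N (opscale k f) h = opscale k (opmul N f h)"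
  by (rule ext) (simp add: opmul_eq opscale_def sum_distrib_left mult_ac)
lemma opmul_scale_right: "opmul N h (opscale k f) = opscale k (opmul N h f)"
  by (rule ext) (simp add: opmul_eq opscale_def sum_distrib_left mult_ac)

lemma opscale_add: "opscale k (f + g) = opscale k f + opscale k g"
  by (rule ext) (simp add: opscale_def algebra_simps)
lemma opmul_sum_left: "opmul N (\<Sum>i\<in>I. F i) h = (\<Sum>i\<in>I. opmul N (F i) h)"
  apply (rule ext)
  apply (simp add: opmul_eq sum_fun_apply sum_distrib_left sum_distrib_right)
  apply (intro impI) apply (rule sum.swap) done
lemma opmul_sum_right: "opmul N h (\<Sum>i\<in>I. F i) = (\<Sum>i\<in>I. opmul N h (F i))"
  apply (rule ext)
  apply (simp add: opmul_eq sum_fun_apply sum_distrib_left sum_distrib_right)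
  apply (intro impI) apply (rule sum.swap) done
lemma opscale_sum: "opscale k (\<Sum>i\<in>I. F i) = (\<Sum>i\<in>I. opscale k (F i))"
  by (rule ext) (simp add: opscale_def sum_fun_apply sum_distrib_left)

lemma opscale_mult: "opscale k (opscale l f) = opscale (k * l) f"
  by (rule ext) (simp add: opscale_def)
lemma opscale_one[simp]: "opscale 1 f = f"
  by (rule ext) (simp add: opscale_def)
lemma opscale_minus1: "opscale (-1) f = - f"
  by (rule ext) (simp add: opscale_def)

lemma zero_LE: "mon_ok N c \<Longrightarrow> (\<lambda>_. 0) \<in> LE N c"
  by (simp add: LE_iff)
lemma self_LE: "mon_ok N c \<Longrightarrow> c \<in> LE N c"
  by (simp add: LE_iff)

lemma opone_left: assumes "okp N g" shows "opmul N opone g = g"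
proof (rule ext)
  fix c
  show "opmul N opone g c = g c"
  proof (cases "mon_ok N c")
    case False then show ?thesis using assms by (simp add: opmul_eq okp_def)
  next
    case True
    have "opmul N opone g c = (\<Sum>a\<in>LE N c. if a = (\<lambda>_. 0) then g c else 0)"
      using True by (auto simp: opmul_eq opone_def op_sign_zero1 intro!: sum.cong)
    also have "\<dots> = g c" using zero_LE[OF True] finite_LE by (simp add: sum.delta)
    finally show ?thesis .
  qed
qed

lemma opone_right: assumes "okp N g" shows "opmul N g opone = g"
proof (rule ext)
  fix c
  show "opmul N g opone c = g c"
  proof (cases "mon_ok N c")
    case False then show ?thesis using assms by (simp add: opmul_eq okp_def)
  next
    case True
    have "opmul N g opone c = (\<Sum>a\<in>LE N c. if a = c then g c else 0)"
      using True
      unfolding opmul_eq[of N g] using True apply simp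
    proof (rule sum.cong)
      fix a assume a: "a \<in> LE N c"
      have iff: "(\<lambda>i. c i - a i) = (\<lambda>_. 0) \<longleftrightarrow> a = c"
        using a True by (auto simp: LE_iff fun_eq_iff) (metis diff_is_0_eq le_antisym)
      show "op_sign N a (\<lambda>i. c i - a i) * g a * opone (\<lambda>i. c i - a i) = (if a = c then g c else 0)"
        unfolding opone_def iff by (auto simp: op_sign_zero2)
    qed simp
    also have "\<dots> = g c" using self_LE[OF True] finite_LE by (simp add: sum.delta)
    finally show ?thesis .
  qed
qed

lemma opprod_append: "opprod N (xs @ ys) = opmul N (opprod N xs) (opprod N ys)"
proof (induct xs)
  case Nil show ?case using okp_opprod[of N ys] by (simp add: opprod_def opone_left)
next
  case (Cons x xs) then show ?case by (simp add: opprod_def opmul_assoc)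
qed

lemma oppow_Suc: "oppow N f (Suc k) = opmul N f (oppow N f k)"
  by (simp add: oppow_def)
lemma oppow_0: "oppow N f 0 = opone"
  by (simp add: oppow_def)
lemma oppow_add: "opmul N (oppow N f a) (oppow N f b) = oppow N f (a + b)"
  by (induct a) (auto simp: oppow_Suc oppow_0 opone_left opmul_assoc)
lemma oppow_Suc': "okp N f \<Longrightarrow> oppow N f (Suc k) = opmul N (oppow N f k) f"
  using oppow_add[of N f k 1] by (simp add: oppow_Suc oppow_0 opone_right)



definition Eg :: "nat \<Rightarrow> nat set \<Rightarrow> nat \<Rightarrow> 'a::comm_ring_1 opol" where
  "Eg N S r = (\<Sum>T\<in>{T. T \<subseteq> S \<and> card T = r}. opprod N (map opvar (sorted_list_of_set T)))"
definition Hg :: "nat \<Rightarrow> nat set \<Rightarrow> nat \<Rightarrow> 'a::comm_ring_1 opol" where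
  "Hg N S r = (\<Sum>xs\<in>{xs. length xs = r \<and> sorted xs \<and> set xs \<subseteq> S}. opprod N (map opvar (rev xs)))"

lemma op_e_Eg: "op_e N r = Eg N {1..N} r" by (simp add: op_e_def Eg_def)
lemma op_h_Hg: "op_h N r = Hg N {1..N} r" by (simp add: op_h_def Hg_def)

lemma okp_Eg[simp]: "okp N (Eg N S r)" by (simp add: Eg_def)
lemma okp_Hg[simp]: "okp N (Hg N S r)" by (simp add: Hg_def)

lemma Eg_0: "finite S \<Longrightarrow> Eg N S 0 = opone"
proof -
  assume f: "finite S"
  have "{T. T \<subseteq> S \<and> card T = 0} = {{}}" using f by (auto simp: card_eq_0_iff dest: rev_finite_subset)
  then show ?thesis by (simp add: Eg_def opprod_def)
qed

lemma Eg_big: "finite S \<Longrightarrow> card S < r \<Longrightarrow> Eg N S r = 0"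
proof -
  assume f: "finite S" "card S < r"
  have e: "{T. T \<subseteq> S \<and> card T = r} = {}" using f card_mono[OF f(1)] leD by blast
  show ?thesis unfolding Eg_def e by simp
qed

lemma Hg_0: "Hg N S 0 = opone"
proof -
  have "{xs. length xs = 0 \<and> sorted xs \<and> set xs \<subseteq> S} = {[]}" by auto
  then show ?thesis by (simp add: Hg_def opprod_def)
qed

lemma Hg_empty: "Hg N {} (Suc r) = 0"
proof -
  have e: "{xs. length xs = Suc r \<and> sorted xs \<and> set xs \<subseteq> {}} = {}" by auto
  show ?thesis unfolding Hg_def e by simp
qed

lemma opprod_single: "i \<in> {1..N} \<Longrightarrow> opprod N [opvar i] = opvar i"
  by (simp add: opprod_def opone_right)

lemma sl_insert_top: "finite T \<Longrightarrow> \<forall>y\<in>T. y < t \<Longrightarrow>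
   sorted_list_of_set (insert t T) = sorted_list_of_set T @ [(t::nat)]"
  apply (subst sorted_list_of_set_unique[symmetric])
  apply simp apply simp
  apply (simp add: sorted_wrt_append card_insert_if)
  apply blast
  done

lemma sl_insert_bot: "finite T \<Longrightarrow> \<forall>y\<in>T. t < y \<Longrightarrow>
   sorted_list_of_set (insert t T) = t # sorted_list_of_set (T::nat set)"
  apply (subst sorted_list_of_set_unique[symmetric])
  apply simp apply simp
  apply (simp add: card_insert_if)
  apply blast
  done

lemma finite_subsets_card: "finite S \<Longrightarrow> finite {T. T \<subseteq> S \<and> card T = r}"
  by (rule finite_subset[of _ "Pow S"]) auto

lemma finite_sorted_lists: "finite S \<Longrightarrow> finite {xs. length xs = r \<and> sorted xs \<and> set xs \<subseteq> S}"
  by (rule finite_subset[OF _ finite_lists_length_eq[of S r]]) auto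

lemma Eg_split:
  assumes SN: "S \<subseteq> {1..N}" and t: "t \<in> S"
    and ins: "\<And>T. T \<subseteq> S - {t} \<Longrightarrow> opprod N (map opvar (sorted_list_of_set (insert t T))) = (F T :: 'a::comm_ring_1 opol)"
  shows "Eg N S (Suc r) = Eg N (S - {t}) (Suc r) + (\<Sum>T\<in>{T. T \<subseteq> S - {t} \<and> card T = r}. F T)"
proof -
  have fin: "finite S" using SN finite_subset by blast
  let ?A = "{T. T \<subseteq> S \<and> card T = Suc r}"
  let ?A1 = "{T. T \<subseteq> S - {t} \<and> card T = Suc r}"
  let ?B = "{T. T \<subseteq> S - {t} \<and> card T = r}"
  have split: "?A = ?A1 \<union> insert t ` ?B"
  proof (rule set_eqI, rule iffI)
    fix T assume T: "T \<in> ?A"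
    have fT: "finite T" using T fin finite_subset by blast
    show "T \<in> ?A1 \<union> insert t ` ?B"
    proof (cases "t \<in> T")
      case True
      then have "T = insert t (T - {t})" "T - {t} \<in> ?B" using T fT by auto
      then show ?thesis by blast
    next
      case False then show ?thesis using T by auto
    qed
  next
    fix T assume "T \<in> ?A1 \<union> insert t ` ?B"
    then show "T \<in> ?A"
    proof
      assume "T \<in> ?A1" then show ?thesis by auto
    next
      assume "T \<in> insert t ` ?B"
      then obtain T' where "T' \<in> ?B" "T = insert t T'" by blast
      moreover have "finite T'" using \<open>T' \<in> ?B\<close> fin finite_subset by blast
      moreover have "t \<notin> T'" using \<open>T' \<in> ?B\<close> by blast
      ultimately show ?thesis using t by auto
    qed
  qed
  have disj: "?A1 \<inter> insert t ` ?B = {}" by auto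
  have inj: "inj_on (insert t) ?B"
  proof (rule inj_onI)
    fix X Y assume X: "X \<in> ?B" and Y: "Y \<in> ?B" and e: "insert t X = insert t Y"
    have "t \<notin> X" "t \<notin> Y" using X Y by auto
    then show "X = Y" using e by (metis Diff_insert_absorb)
  qed
  have "(Eg N S (Suc r) :: 'a opol) = (\<Sum>T\<in>?A1. opprod N (map opvar (sorted_list_of_set T))) +
       (\<Sum>T\<in>insert t ` ?B. opprod N (map opvar (sorted_list_of_set T)))"
    unfolding Eg_def split
    by (rule sum.union_disjoint) (auto intro: finite_subsets_card fin)
  moreover have "(\<Sum>T\<in>insert t ` ?B. opprod N (map opvar (sorted_list_of_set T)) :: 'a opol) = (\<Sum>T\<in>?B. F T)"
    by (subst sum.reindex[OF inj]) (auto intro!: sum.cong ins)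
  ultimately show ?thesis unfolding Eg_def by (simp only:)
qed

lemma Eg_top:
  assumes SN: "S \<subseteq> {1..N}" and t: "t \<in> S" and mx: "\<forall>y\<in>S. y \<le> t"
  shows "Eg N S (Suc r) = Eg N (S - {t}) (Suc r) + opmul N (Eg N (S - {t}) r) (opvar t :: 'a::comm_ring_1 opol)"
proof -
  have fin: "finite S" using SN finite_subset by blast
  have tN: "t \<in> {1..N}" using SN t by blast
  have "Eg N S (Suc r) = Eg N (S - {t}) (Suc r) + (\<Sum>T\<in>{T. T \<subseteq> S - {t} \<and> card T = r}. opmul N (opprod N (map opvar (sorted_list_of_set T))) (opvar t :: 'a opol))"
  proof (rule Eg_split[OF SN t])
    fix T assume T: "T \<subseteq> S - {t}"
    have "finite T" using T fin finite_subset by blast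
    moreover have "\<forall>y\<in>T. y < t" using T mx by force
    ultimately have e: "sorted_list_of_set (insert t T) = sorted_list_of_set T @ [t]" by (rule sl_insert_top)
    show "opprod N (map opvar (sorted_list_of_set (insert t T))) = opmul N (opprod N (map opvar (sorted_list_of_set T))) (opvar t)"
      unfolding e by (simp add: opprod_append opprod_single[OF tN])
  qed
  then show ?thesis by (simp add: Eg_def opmul_sum_left)
qed

lemma Eg_bot:
  assumes SN: "S \<subseteq> {1..N}" and t: "t \<in> S" and mn: "\<forall>y\<in>S. t \<le> y"
  shows "Eg N S (Suc r) = Eg N (S - {t}) (Suc r) + opmul N (opvar t :: 'a::comm_ring_1 opol) (Eg N (S - {t}) r)"
proof -
  have fin: "finite S" using SN finite_subset by blast
  have "Eg N S (Suc r) = Eg N (S - {t}) (Suc r) + (\<Sum>T\<in>{T. T \<subseteq> S - {t} \<and> card T = r}. opmul N (opvar t :: 'a opol) (opprod N (map opvar (sorted_list_of_set T))))"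
  proof (rule Eg_split[OF SN t])
    fix T assume T: "T \<subseteq> S - {t}"
    have "finite T" using T fin finite_subset by blast
    moreover have "\<forall>y\<in>T. t < y" using T mn by force
    ultimately have e: "sorted_list_of_set (insert t T) = t # sorted_list_of_set T" by (rule sl_insert_bot)
    show "opprod N (map opvar (sorted_list_of_set (insert t T))) = opmul N (opvar t) (opprod N (map opvar (sorted_list_of_set T)))"
      unfolding e by (simp add: opprod_def)
  qed
  then show ?thesis by (simp add: Eg_def opmul_sum_right)
qed


lemma Hg_split:
  assumes fin: "finite S"
    and spl: "{xs. length xs = Suc r \<and> sorted xs \<and> set xs \<subseteq> S} =
       {xs. length xs = Suc r \<and> sorted xs \<and> set xs \<subseteq> S - {t}} \<union> g ` {ys. length ys = r \<and> sorted ys \<and> set ys \<subseteq> S}"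
    and tin: "\<And>ys. t \<in> set (g ys)"
    and inj: "inj g"
    and val: "\<And>ys. opprod N (map opvar (rev (g ys))) = (F ys :: 'a::comm_ring_1 opol)"
  shows "Hg N S (Suc r) = Hg N (S - {t}) (Suc r) + (\<Sum>ys\<in>{ys. length ys = r \<and> sorted ys \<and> set ys \<subseteq> S}. F ys)"
proof -
  let ?A1 = "{xs. length xs = Suc r \<and> sorted xs \<and> set xs \<subseteq> S - {t}}"
  let ?B = "{ys. length ys = r \<and> sorted ys \<and> set ys \<subseteq> S}"
  have disj: "?A1 \<inter> g ` ?B = {}" using tin by blast
  have "(Hg N S (Suc r) :: 'a opol) = (\<Sum>xs\<in>?A1. opprod N (map opvar (rev xs))) + (\<Sum>xs\<in>g ` ?B. opprod N (map opvar (rev xs)))"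
    unfolding Hg_def spl
    apply (rule sum.union_disjoint)
      apply (rule finite_sorted_lists, use fin in simp)
     apply (rule finite_imageI, rule finite_sorted_lists[OF fin])
    apply (rule disj)
    done
  moreover have "(\<Sum>xs\<in>g ` ?B. opprod N (map opvar (rev xs)) :: 'a opol) = (\<Sum>ys\<in>?B. F ys)"
    by (subst sum.reindex) (auto intro: inj_on_subset[OF inj] simp: val)
  ultimately show ?thesis unfolding Hg_def by (simp only:)
qed

lemma Hg_top:
  assumes SN: "S \<subseteq> {1..N}" and t: "t \<in> S" and mx: "\<forall>y\<in>S. y \<le> t"
  shows "Hg N S (Suc r) = Hg N (S - {t}) (Suc r) + opmul N (opvar t :: 'a::comm_ring_1 opol) (Hg N S r)"
proof -
  have fin: "finite S" using SN finite_subset by blast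
  have "Hg N S (Suc r) = Hg N (S - {t}) (Suc r) + (\<Sum>ys\<in>{ys. length ys = r \<and> sorted ys \<and> set ys \<subseteq> S}. opmul N (opvar t :: 'a opol) (opprod N (map opvar (rev ys))))"
  proof (rule Hg_split[OF fin, where g="\<lambda>ys. ys @ [t]"])
    show "inj (\<lambda>ys. ys @ [t])" by (rule injI) simp
    show "\<And>ys. t \<in> set (ys @ [t])" by simp
    show "\<And>ys. opprod N (map opvar (rev (ys @ [t]))) = opmul N (opvar t) (opprod N (map opvar (rev ys)))"
      by (simp add: opprod_def)
    show "{xs. length xs = Suc r \<and> sorted xs \<and> set xs \<subseteq> S} =
       {xs. length xs = Suc r \<and> sorted xs \<and> set xs \<subseteq> S - {t}} \<union> (\<lambda>ys. ys @ [t]) ` {ys. length ys = r \<and> sorted ys \<and> set ys \<subseteq> S}"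
    proof (rule set_eqI, rule iffI)
      fix xs assume xs: "xs \<in> {xs. length xs = Suc r \<and> sorted xs \<and> set xs \<subseteq> S}"
      show "xs \<in> {xs. length xs = Suc r \<and> sorted xs \<and> set xs \<subseteq> S - {t}} \<union> (\<lambda>ys. ys @ [t]) ` {ys. length ys = r \<and> sorted ys \<and> set ys \<subseteq> S}"
      proof (cases "t \<in> set xs")
        case False then show ?thesis using xs by auto
      next
        case True
        then have "xs \<noteq> []" by auto
        then obtain ys z where yz: "xs = ys @ [z]" by (metis rev_exhaust)
        have le: "\<forall>y\<in>set ys. y \<le> z" using xs yz by (simp add: sorted_append)
        have "z \<le> t" using xs yz mx by auto
        moreover have "t \<le> z" using True le yz by auto
        ultimately have "z = t" by simp
        then show ?thesis using xs yz by (auto simp: sorted_append)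
      qed
    next
      fix xs assume "xs \<in> {xs. length xs = Suc r \<and> sorted xs \<and> set xs \<subseteq> S - {t}} \<union> (\<lambda>ys. ys @ [t]) ` {ys. length ys = r \<and> sorted ys \<and> set ys \<subseteq> S}"
      then show "xs \<in> {xs. length xs = Suc r \<and> sorted xs \<and> set xs \<subseteq> S}"
        using t mx by (auto simp: sorted_append subset_iff)
    qed
  qed
  then show ?thesis by (simp add: Hg_def opmul_sum_right)
qed

lemma Hg_bot:
  assumes SN: "S \<subseteq> {1..N}" and t: "t \<in> S" and mn: "\<forall>y\<in>S. t \<le> y"
  shows "Hg N S (Suc r) = Hg N (S - {t}) (Suc r) + opmul N (Hg N S r) (opvar t :: 'a::comm_ring_1 opol)"
proof -
  have fin: "finite S" using SN finite_subset by blast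
  have tN: "t \<in> {1..N}" using SN t by blast
  have "Hg N S (Suc r) = Hg N (S - {t}) (Suc r) + (\<Sum>ys\<in>{ys. length ys = r \<and> sorted ys \<and> set ys \<subseteq> S}. opmul N (opprod N (map opvar (rev ys))) (opvar t :: 'a opol))"
  proof (rule Hg_split[OF fin, where g="\<lambda>ys. t # ys"])
    show "inj (\<lambda>ys. t # ys)" by (rule injI) simp
    show "\<And>ys. t \<in> set (t # ys)" by simp
    show "\<And>ys. opprod N (map opvar (rev (t # ys))) = opmul N (opprod N (map opvar (rev ys))) (opvar t)"
      by (simp add: opprod_append opprod_single[OF tN])
    show "{xs. length xs = Suc r \<and> sorted xs \<and> set xs \<subseteq> S} =
       {xs. length xs = Suc r \<and> sorted xs \<and> set xs \<subseteq> S - {t}} \<union> (\<lambda>ys. t # ys) ` {ys. length ys = r \<and> sorted ys \<and> set ys \<subseteq> S}"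
    proof (rule set_eqI, rule iffI)
      fix xs assume xs: "xs \<in> {xs. length xs = Suc r \<and> sorted xs \<and> set xs \<subseteq> S}"
      show "xs \<in> {xs. length xs = Suc r \<and> sorted xs \<and> set xs \<subseteq> S - {t}} \<union> (\<lambda>ys. t # ys) ` {ys. length ys = r \<and> sorted ys \<and> set ys \<subseteq> S}"
      proof (cases "t \<in> set xs")
        case False then show ?thesis using xs by auto
      next
        case True
        then obtain z ys where yz: "xs = z # ys" by (cases xs) auto
        have le: "\<forall>y\<in>set ys. z \<le> y" using xs yz by simp
        have "t \<le> z" using xs yz mn by auto
        moreover have "z \<le> t" using True le yz by auto
        ultimately have "z = t" by simp
        then show ?thesis using xs yz by auto
      qed
    next
      fix xs assume "xs \<in> {xs. length xs = Suc r \<and> sorted xs \<and> set xs \<subseteq> S - {t}} \<union> (\<lambda>ys. t # ys) ` {ys. length ys = r \<and> sorted ys \<and> set ys \<subseteq> S}"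
      then show "xs \<in> {xs. length xs = Suc r \<and> sorted xs \<and> set xs \<subseteq> S}"
        using t mn by (auto simp: subset_iff)
    qed
  qed
  then show ?thesis by (simp add: Hg_def opmul_sum_left)
qed




definition Et :: "nat \<Rightarrow> nat set \<Rightarrow> nat \<Rightarrow> 'a::comm_ring_1 opol" where
  "Et N S j = opscale ((-1)^j) (Eg N S j)"

lemma okp_Et[simp]: "okp N (Et N S j)" by (simp add: Et_def)

lemma Et_0: "finite S \<Longrightarrow> Et N S 0 = opone"
  by (simp add: Et_def Eg_0)

lemma Et_big: "finite S \<Longrightarrow> card S < j \<Longrightarrow> Et N S j = 0"
  unfolding Et_def by (simp add: Eg_big opscale_def fun_eq_iff)

lemma opscale_neg: "opscale (- k) f = - opscale k f"
  by (rule ext) (simp add: opscale_def)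
lemma opscale_diff: "opscale k (f - g) = opscale k f - opscale k g"
  by (rule ext) (simp add: opscale_def algebra_simps)

lemma Et_top:
  assumes SN: "S \<subseteq> {1..N}" and t: "t \<in> S" and mx: "\<forall>y\<in>S. y \<le> t"
  shows "Et N S (Suc r) = Et N (S - {t}) (Suc r) - opmul N (Et N (S - {t}) r) (opvar t :: 'a::comm_ring_1 opol)"
  unfolding Et_def Eg_top[OF SN t mx] opmul_scale_left
  by (simp add: opscale_def fun_eq_iff algebra_simps)

lemma Et_bot:
  assumes SN: "S \<subseteq> {1..N}" and t: "t \<in> S" and mn: "\<forall>y\<in>S. t \<le> y"
  shows "Et N S (Suc r) = Et N (S - {t}) (Suc r) - opmul N (opvar t :: 'a::comm_ring_1 opol) (Et N (S - {t}) r)"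
  unfolding Et_def Eg_bot[OF SN t mn] opmul_scale_right
  by (simp add: opscale_def fun_eq_iff algebra_simps)


lemma idA_step:
  assumes SN: "S \<subseteq> {1..N}" and b: "b \<in> S" and mn: "\<forall>y\<in>S. b \<le> y"
  shows "(\<Sum>r\<le>Suc j. opmul N (Hg N S r) (Et N S (Suc j - r))) =
         (\<Sum>r\<le>Suc j. opmul N (Hg N (S - {b}) r) (Et N (S - {b}) (Suc j - r)) :: 'a::comm_ring_1 opol)"
proof -
  have fin: "finite S" using SN finite_subset by blast
  have SN': "S - {b} \<subseteq> {1..N}" using SN by blast
  have fin': "finite (S - {b})" using fin by simp
  let ?H = "Hg N S :: nat \<Rightarrow> 'a opol" and ?H' = "Hg N (S - {b}) :: nat \<Rightarrow> 'a opol"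
  let ?E = "Et N S :: nat \<Rightarrow> 'a opol" and ?E' = "Et N (S - {b}) :: nat \<Rightarrow> 'a opol"
  let ?x = "opvar b :: 'a opol"
  let ?X = "(\<Sum>r\<le>j. opmul N (opmul N (?H r) ?x) (?E' (j - r)))"
  have s1: "(\<Sum>r\<le>Suc j. opmul N (?H r) (?E (Suc j - r))) =
     (\<Sum>r\<le>j. opmul N (?H r) (?E' (Suc (j - r)))) - ?X + ?H (Suc j)"
  proof -
    have a: "(\<Sum>r\<le>Suc j. opmul N (?H r) (?E (Suc j - r))) = (\<Sum>r\<le>j. opmul N (?H r) (?E (Suc j - r))) + ?H (Suc j)"
      by (simp add: Et_0[OF fin] opone_right)
    moreover have "(\<Sum>r\<le>j. opmul N (?H r) (?E (Suc j - r))) = (\<Sum>r\<le>j. opmul N (?H r) (?E' (Suc (j - r))) - opmul N (opmul N (?H r) ?x) (?E' (j - r)))"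
    proof (rule sum.cong)
      fix r assume "r \<in> {..j}"
      then have "Suc j - r = Suc (j - r)" by auto
      then show "opmul N (?H r) (?E (Suc j - r)) = opmul N (?H r) (?E' (Suc (j - r))) - opmul N (opmul N (?H r) ?x) (?E' (j - r))"
        by (simp add: Et_bot[OF SN b mn] opmul_diff_right opmul_assoc)
    qed simp
    ultimately show ?thesis by (simp add: sum_subtractf)
  qed
  have s2: "(\<Sum>r\<le>j. opmul N (?H r) (?E' (Suc (j - r)))) + ?H (Suc j) =
     (\<Sum>r\<le>Suc j. opmul N (?H' r) (?E' (Suc j - r))) + ?X"
  proof -
    have "(\<Sum>r\<le>j. opmul N (?H r) (?E' (Suc (j - r)))) + ?H (Suc j) = (\<Sum>r\<le>Suc j. opmul N (?H r) (?E' (Suc j - r)))"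
    proof -
      have "(\<Sum>r\<le>j. opmul N (?H r) (?E' (Suc (j - r)))) = (\<Sum>r\<le>j. opmul N (?H r) (?E' (Suc j - r)))"
        by (rule sum.cong) (auto simp: Suc_diff_le)
      then show ?thesis by (simp add: Et_0[OF fin'] opone_right)
    qed
    also have "\<dots> = opmul N (?H 0) (?E' (Suc j)) + (\<Sum>r\<le>j. opmul N (?H (Suc r)) (?E' (j - r)))"
      by (subst sum.atMost_Suc_shift) simp
    also have "\<dots> = opmul N (?H' 0) (?E' (Suc j)) + (\<Sum>r\<le>j. opmul N (?H' (Suc r)) (?E' (j - r))) + ?X"
      by (simp add: Hg_0 Hg_bot[OF SN b mn] opmul_add_left sum.distrib add.assoc)
    also have "opmul N (?H' 0) (?E' (Suc j)) + (\<Sum>r\<le>j. opmul N (?H' (Suc r)) (?E' (j - r))) = (\<Sum>r\<le>Suc j. opmul N (?H' r) (?E' (Suc j - r)))"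
      by (subst sum.atMost_Suc_shift) simp
    finally show ?thesis .
  qed
  from s1 s2 show ?thesis by (simp add: algebra_simps)
qed

lemma idB_step:
  assumes SN: "S \<subseteq> {1..N}" and b: "b \<in> S" and mx: "\<forall>y\<in>S. y \<le> b"
  shows "(\<Sum>r\<le>Suc j. opmul N (Et N S (Suc j - r)) (Hg N S r)) =
         (\<Sum>r\<le>Suc j. opmul N (Et N (S - {b}) (Suc j - r)) (Hg N (S - {b}) r) :: 'a::comm_ring_1 opol)"
proof -
  have fin: "finite S" using SN finite_subset by blast
  have SN': "S - {b} \<subseteq> {1..N}" using SN by blast
  have fin': "finite (S - {b})" using fin by simp
  let ?H = "Hg N S :: nat \<Rightarrow> 'a opol" and ?H' = "Hg N (S - {b}) :: nat \<Rightarrow> 'a opol"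
  let ?E = "Et N S :: nat \<Rightarrow> 'a opol" and ?E' = "Et N (S - {b}) :: nat \<Rightarrow> 'a opol"
  let ?x = "opvar b :: 'a opol"
  let ?X = "(\<Sum>r\<le>j. opmul N (?E' (j - r)) (opmul N ?x (?H r)))"
  have s1: "(\<Sum>r\<le>Suc j. opmul N (?E (Suc j - r)) (?H r)) =
     (\<Sum>r\<le>j. opmul N (?E' (Suc (j - r))) (?H r)) - ?X + ?H (Suc j)"
  proof -
    have a: "(\<Sum>r\<le>Suc j. opmul N (?E (Suc j - r)) (?H r)) = (\<Sum>r\<le>j. opmul N (?E (Suc j - r)) (?H r)) + ?H (Suc j)"
      by (simp add: Et_0[OF fin] opone_left)
    moreover have "(\<Sum>r\<le>j. opmul N (?E (Suc j - r)) (?H r)) = (\<Sum>r\<le>j. opmul N (?E' (Suc (j - r))) (?H r) - opmul N (?E' (j - r)) (opmul N ?x (?H r)))"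
    proof (rule sum.cong)
      fix r assume "r \<in> {..j}"
      then have "Suc j - r = Suc (j - r)" by auto
      then show "opmul N (?E (Suc j - r)) (?H r) = opmul N (?E' (Suc (j - r))) (?H r) - opmul N (?E' (j - r)) (opmul N ?x (?H r))"
        by (simp add: Et_top[OF SN b mx] opmul_diff_left opmul_assoc)
    qed simp
    ultimately show ?thesis by (simp add: sum_subtractf)
  qed
  have s2: "(\<Sum>r\<le>j. opmul N (?E' (Suc (j - r))) (?H r)) + ?H (Suc j) =
     (\<Sum>r\<le>Suc j. opmul N (?E' (Suc j - r)) (?H' r)) + ?X"
  proof -
    have "(\<Sum>r\<le>j. opmul N (?E' (Suc (j - r))) (?H r)) + ?H (Suc j) = (\<Sum>r\<le>Suc j. opmul N (?E' (Suc j - r)) (?H r))"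
    proof -
      have "(\<Sum>r\<le>j. opmul N (?E' (Suc (j - r))) (?H r)) = (\<Sum>r\<le>j. opmul N (?E' (Suc j - r)) (?H r))"
        by (rule sum.cong) (auto simp: Suc_diff_le)
      then show ?thesis by (simp add: Et_0[OF fin'] opone_left)
    qed
    also have "\<dots> = opmul N (?E' (Suc j)) (?H 0) + (\<Sum>r\<le>j. opmul N (?E' (j - r)) (?H (Suc r)))"
      by (subst sum.atMost_Suc_shift) simp
    also have "\<dots> = opmul N (?E' (Suc j)) (?H' 0) + (\<Sum>r\<le>j. opmul N (?E' (j - r)) (?H' (Suc r))) + ?X"
      by (simp add: Hg_0 Hg_top[OF SN b mx] opmul_add_right sum.distrib add.assoc)
    also have "opmul N (?E' (Suc j)) (?H' 0) + (\<Sum>r\<le>j. opmul N (?E' (j - r)) (?H' (Suc r))) = (\<Sum>r\<le>Suc j. opmul N (?E' (Suc j - r)) (?H' r))"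
      by (subst sum.atMost_Suc_shift) simp
    finally show ?thesis .
  qed
  from s1 s2 show ?thesis by (simp add: algebra_simps)
qed


lemma id_empty_term: "r \<le> Suc j \<Longrightarrow> Hg N {} r = 0 \<or> Et N {} (Suc j - r) = (0 :: 'a::comm_ring_1 opol)"
  by (cases r) (auto simp: Hg_empty Et_big)

lemma idA_aux: "card S = n \<Longrightarrow> S \<subseteq> {1..N} \<Longrightarrow>
  (\<Sum>r\<le>Suc j. opmul N (Hg N S r) (Et N S (Suc j - r))) = (0 :: 'a::comm_ring_1 opol)"
proof (induct n arbitrary: S)
  case 0
  then have "S = {}" using finite_subset by fastforce
  show ?case unfolding \<open>S = {}\<close>
  proof (rule sum.neutral, rule ballI)
    fix r assume "r \<in> {..Suc j}"
    then have "Hg N {} r = (0::'a opol) \<or> Et N {} (Suc j - r) = (0 :: 'a opol)" by (intro id_empty_term) auto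
    then show "opmul N (Hg N {} r) (Et N {} (Suc j - r)) = (0::'a opol)" by auto
  qed
next
  case (Suc n)
  have fin: "finite S" using Suc.prems finite_subset by blast
  have ne: "S \<noteq> {}" using Suc.prems by auto
  let ?b = "Min S"
  have b: "?b \<in> S" using Min_in[OF fin ne] .
  have mn: "\<forall>y\<in>S. ?b \<le> y" using fin by simp
  have c: "card (S - {?b}) = n" using Suc.prems b fin by simp
  have s: "S - {?b} \<subseteq> {1..N}" using Suc.prems by blast
  show ?case by (rule trans[OF idA_step[OF Suc.prems(2) b mn] Suc.hyps[OF c s]])
qed

lemma idB_aux: "card S = n \<Longrightarrow> S \<subseteq> {1..N} \<Longrightarrow>
  (\<Sum>r\<le>Suc j. opmul N (Et N S (Suc j - r)) (Hg N S r)) = (0 :: 'a::comm_ring_1 opol)"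
proof (induct n arbitrary: S)
  case 0
  then have "S = {}" using finite_subset by fastforce
  show ?case unfolding \<open>S = {}\<close>
  proof (rule sum.neutral, rule ballI)
    fix r assume "r \<in> {..Suc j}"
    then have "Hg N {} r = (0::'a opol) \<or> Et N {} (Suc j - r) = (0 :: 'a opol)" by (intro id_empty_term) auto
    then show "opmul N (Et N {} (Suc j - r)) (Hg N {} r) = (0::'a opol)" by auto
  qed
next
  case (Suc n)
  have fin: "finite S" using Suc.prems finite_subset by blast
  have ne: "S \<noteq> {}" using Suc.prems by auto
  let ?b = "Max S"
  have b: "?b \<in> S" using Max_in[OF fin ne] .
  have mx: "\<forall>y\<in>S. y \<le> ?b" using fin by simp
  have c: "card (S - {?b}) = n" using Suc.prems b fin by simp
  have s: "S - {?b} \<subseteq> {1..N}" using Suc.prems by blast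
  show ?case by (rule trans[OF idB_step[OF Suc.prems(2) b mx] Suc.hyps[OF c s]])
qed

lemma idA: "S \<subseteq> {1..N} \<Longrightarrow> (\<Sum>r\<le>Suc j. opmul N (Hg N S r) (Et N S (Suc j - r))) = (0 :: 'a::comm_ring_1 opol)"
  using idA_aux by blast
lemma idB: "S \<subseteq> {1..N} \<Longrightarrow> (\<Sum>r\<le>Suc j. opmul N (Et N S (Suc j - r)) (Hg N S r)) = (0 :: 'a::comm_ring_1 opol)"
  using idB_aux by blast




lemma T1:
  fixes n :: nat
  defines "S \<equiv> {1..Suc n}"
  shows "(\<Sum>q\<le>j. opmul (Suc n) (Et (Suc n) S (j - q)) (oppow (Suc n) (opvar (Suc n)) q))
         = (Et (Suc n) (S - {Suc n}) j :: 'a::comm_ring_1 opol)"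
proof (induct j)
  case 0
  have "finite S" "finite (S - {Suc n})" by (auto simp: S_def)
  then show ?case by (simp add: Et_0 oppow_0 opone_left)
next
  case (Suc j)
  let ?x = "opvar (Suc n) :: 'a opol"
  let ?E = "Et (Suc n) S :: nat \<Rightarrow> 'a opol" and ?E' = "Et (Suc n) (S - {Suc n}) :: nat \<Rightarrow> 'a opol"
  let ?p = "oppow (Suc n) ?x"
  have SN: "S \<subseteq> {1..Suc n}" and t: "Suc n \<in> S" and mx: "\<forall>y\<in>S. y \<le> Suc n" by (auto simp: S_def)
  have okx: "okp (Suc n) ?x" by simp
  have a: "(\<Sum>q\<le>Suc j. opmul (Suc n) (?E (Suc j - q)) (?p q)) =
     opmul (Suc n) (?E (Suc j)) (?p 0) + (\<Sum>q\<le>j. opmul (Suc n) (?E (j - q)) (?p (Suc q)))"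
    by (subst sum.atMost_Suc_shift) simp
  have b: "(\<Sum>q\<le>j. opmul (Suc n) (?E (j - q)) (?p (Suc q))) = opmul (Suc n) (?E' j) ?x"
  proof -
    have "(\<Sum>q\<le>j. opmul (Suc n) (?E (j - q)) (?p (Suc q))) = (\<Sum>q\<le>j. opmul (Suc n) (opmul (Suc n) (?E (j - q)) (?p q)) ?x)"
      by (rule sum.cong) (simp_all add: oppow_Suc'[OF okx] opmul_assoc)
    also have "\<dots> = opmul (Suc n) (\<Sum>q\<le>j. opmul (Suc n) (?E (j - q)) (?p q)) ?x"
      by (simp add: opmul_sum_left)
    also have "\<dots> = opmul (Suc n) (?E' j) ?x" using Suc by simp
    finally show ?thesis .
  qed
  have c: "opmul (Suc n) (?E (Suc j)) (?p 0) = ?E' (Suc j) - opmul (Suc n) (?E' j) ?x"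
    by (simp add: oppow_0 opone_right Et_top[OF SN t mx])
  show ?case using a b c by simp
qed

lemma B1:
  fixes n :: nat
  defines "S \<equiv> {1..Suc n}"
  shows "oppow (Suc n) (opvar (Suc n)) (Suc n) + (\<Sum>q\<le>n. opmul (Suc n) (Et (Suc n) S (Suc n - q)) (oppow (Suc n) (opvar (Suc n)) q))
         = (0 :: 'a::comm_ring_1 opol)"
proof -
  let ?x = "opvar (Suc n) :: 'a opol"
  let ?E = "Et (Suc n) S :: nat \<Rightarrow> 'a opol"
  let ?p = "oppow (Suc n) ?x"
  have "(\<Sum>q\<le>Suc n. opmul (Suc n) (?E (Suc n - q)) (?p q)) = Et (Suc n) (S - {Suc n}) (Suc n)"
    unfolding S_def by (rule T1)
  also have "Et (Suc n) (S - {Suc n}) (Suc n) = (0 :: 'a opol)"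
    by (rule Et_big) (auto simp: S_def)
  finally have z: "(\<Sum>q\<le>Suc n. opmul (Suc n) (?E (Suc n - q)) (?p q)) = 0" .
  have "(\<Sum>q\<le>Suc n. opmul (Suc n) (?E (Suc n - q)) (?p q)) = (\<Sum>q\<le>n. opmul (Suc n) (?E (Suc n - q)) (?p q)) + ?p (Suc n)"
    by (simp add: Et_0 S_def opone_left)
  with z show ?thesis by (simp add: add.commute)
qed


lemma P1:
  fixes n m :: nat
  defines "S \<equiv> {1..Suc n}"
  shows "oppow (Suc n) (opvar (Suc n)) (m + Suc n) + (\<Sum>q\<le>n. opmul (Suc n)
            (\<Sum>r\<le>m. opmul (Suc n) (Hg (Suc n) S r) (Et (Suc n) S (m + Suc n - q - r)))
            (oppow (Suc n) (opvar (Suc n)) q)) = (0 :: 'a::comm_ring_1 opol)"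
proof (induct m)
  case 0
  have fS: "finite S" by (simp add: S_def)
  show ?case using B1[of n, where 'a='a] by (simp add: Hg_0 opone_left S_def)
next
  case (Suc m)
  let ?N = "Suc n"
  let ?x = "opvar (Suc n) :: 'a opol"
  let ?E = "Et (Suc n) S :: nat \<Rightarrow> 'a opol"
  let ?H = "Hg (Suc n) S :: nat \<Rightarrow> 'a opol"
  let ?p = "oppow (Suc n) ?x"
  define C where "C = (\<lambda>m q. \<Sum>r\<le>m. opmul ?N (?H r) (?E (m + Suc n - q - r)))"
  define D where "D = (\<lambda>q. \<Sum>r\<le>m. opmul ?N (?H r) (?E (Suc m + Suc n - q - r)))"
  have SN: "S \<subseteq> {1..Suc n}" by (simp add: S_def)
  have fS: "finite S" "card S = Suc n" by (auto simp: S_def)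
  have okx: "okp (Suc n) ?x" by simp
  have IH: "?p (m + Suc n) + (\<Sum>q\<le>n. opmul ?N (C m q) (?p q)) = 0"
    using Suc unfolding C_def .
  have a: "\<And>q. q \<le> n \<Longrightarrow> C (Suc m) q = D q + opmul ?N (?H (Suc m)) (?E (Suc n - q))"
    by (simp add: C_def D_def)
  have bsum: "(\<Sum>q\<le>n. opmul ?N (C (Suc m) q) (?p q)) =
      (\<Sum>q\<le>n. opmul ?N (D q) (?p q)) + opmul ?N (?H (Suc m)) (\<Sum>q\<le>n. opmul ?N (?E (Suc n - q)) (?p q))"
  proof -
    have "(\<Sum>q\<le>n. opmul ?N (C (Suc m) q) (?p q)) = (\<Sum>q\<le>n. opmul ?N (D q) (?p q) + opmul ?N (?H (Suc m)) (opmul ?N (?E (Suc n - q)) (?p q)))"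
      by (rule sum.cong) (simp_all add: a opmul_add_left opmul_assoc)
    then show ?thesis by (simp add: sum.distrib opmul_sum_right)
  qed
  have c: "(\<Sum>q\<le>n. opmul ?N (?E (Suc n - q)) (?p q)) = - ?p (Suc n)"
    using B1[of n, where 'a='a] unfolding S_def add_eq_0_iff .
  have D0: "D 0 = 0"
    unfolding D_def by (rule sum.neutral) (auto simp: Et_big fS)
  have DS: "\<And>q. D (Suc q) = C m q" by (simp add: C_def D_def)
  have d: "(\<Sum>q\<le>n. opmul ?N (D q) (?p q)) = (\<Sum>q<n. opmul ?N (C m q) (?p (Suc q)))"
  proof -
    have "(\<Sum>q\<le>n. opmul ?N (D q) (?p q)) = (\<Sum>q<Suc n. opmul ?N (D q) (?p q))"
      by (simp add: lessThan_Suc_atMost)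
    also have "\<dots> = opmul ?N (D 0) (?p 0) + (\<Sum>q<n. opmul ?N (D (Suc q)) (?p (Suc q)))"
      by (rule sum.lessThan_Suc_shift)
    also have "\<dots> = (\<Sum>q<n. opmul ?N (C m q) (?p (Suc q)))"
      by (simp add: D0 DS)
    finally show ?thesis .
  qed
  have e: "C m n = - ?H (Suc m)"
  proof -
    have z: "(\<Sum>r\<le>Suc m. opmul ?N (?H r) (?E (Suc m - r))) = 0" by (rule idA[OF SN])
    have "(\<Sum>r\<le>Suc m. opmul ?N (?H r) (?E (Suc m - r))) = C m n + ?H (Suc m)"
      by (simp add: C_def Et_0 fS opone_right)
    with z show ?thesis by (simp add: eq_neg_iff_add_eq_0)
  qed
  have f: "?p (Suc m + Suc n) = - ((\<Sum>q<n. opmul ?N (C m q) (?p (Suc q))) + opmul ?N (C m n) (?p (Suc n)))"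
  proof -
    have f1: "?p (Suc m + Suc n) = opmul ?N (?p (m + Suc n)) ?x"
      by (simp add: oppow_Suc'[OF okx])
    have f2: "?p (m + Suc n) = - (\<Sum>q\<le>n. opmul ?N (C m q) (?p q))"
      using IH by (simp add: eq_neg_iff_add_eq_0)
    have f3: "opmul ?N (- (\<Sum>q\<le>n. opmul ?N (C m q) (?p q))) ?x = - (\<Sum>q\<le>n. opmul ?N (C m q) (?p (Suc q)))"
      by (simp add: opmul_uminus_left opmul_sum_left opmul_assoc oppow_Suc'[OF okx])
    have f4: "(\<Sum>q\<le>n. opmul ?N (C m q) (?p (Suc q))) = (\<Sum>q<n. opmul ?N (C m q) (?p (Suc q))) + opmul ?N (C m n) (?p (Suc n))"
      by (simp add: lessThan_Suc_atMost[symmetric])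
    show ?thesis unfolding f1 f2 f3 f4 ..
  qed
  have "?p (Suc m + Suc n) + (\<Sum>q\<le>n. opmul ?N (C (Suc m) q) (?p q)) = 0"
    unfolding f bsum c d e by (simp add: opmul_uminus_left opmul_uminus_right)
  then show ?case unfolding C_def .
qed


lemma T2:
  fixes n :: nat
  defines "S \<equiv> {1..Suc n}"
  shows "(\<Sum>q\<le>j. opmul (Suc n) (oppow (Suc n) (opvar 1) q) (Et (Suc n) S (j - q)))
         = (Et (Suc n) (S - {1}) j :: 'a::comm_ring_1 opol)"
proof (induct j)
  case 0
  have "finite S" "finite (S - {1})" by (auto simp: S_def)
  then show ?case by (simp add: Et_0 oppow_0 opone_left)
next
  case (Suc j)
  let ?x = "opvar 1 :: 'a opol"
  let ?E = "Et (Suc n) S :: nat \<Rightarrow> 'a opol" and ?E' = "Et (Suc n) (S - {1}) :: nat \<Rightarrow> 'a opol"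
  let ?p = "oppow (Suc n) ?x"
  have SN: "S \<subseteq> {1..Suc n}" and t: "1 \<in> S" and mn: "\<forall>y\<in>S. 1 \<le> y" by (auto simp: S_def)
  have a: "(\<Sum>q\<le>Suc j. opmul (Suc n) (?p q) (?E (Suc j - q))) =
     opmul (Suc n) (?p 0) (?E (Suc j)) + (\<Sum>q\<le>j. opmul (Suc n) (?p (Suc q)) (?E (j - q)))"
    by (subst sum.atMost_Suc_shift) simp
  have b: "(\<Sum>q\<le>j. opmul (Suc n) (?p (Suc q)) (?E (j - q))) = opmul (Suc n) ?x (?E' j)"
  proof -
    have "(\<Sum>q\<le>j. opmul (Suc n) (?p (Suc q)) (?E (j - q))) = (\<Sum>q\<le>j. opmul (Suc n) ?x (opmul (Suc n) (?p q) (?E (j - q))))"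
      by (rule sum.cong) (simp_all add: oppow_Suc opmul_assoc)
    also have "\<dots> = opmul (Suc n) ?x (\<Sum>q\<le>j. opmul (Suc n) (?p q) (?E (j - q)))"
      by (simp add: opmul_sum_right)
    also have "\<dots> = opmul (Suc n) ?x (?E' j)" using Suc by simp
    finally show ?thesis .
  qed
  have c: "opmul (Suc n) (?p 0) (?E (Suc j)) = ?E' (Suc j) - opmul (Suc n) ?x (?E' j)"
    by (simp add: oppow_0 opone_left Et_bot[OF SN t mn])
  show ?case using a b c by simp
qed

lemma B2:
  fixes n :: nat
  defines "S \<equiv> {1..Suc n}"
  shows "oppow (Suc n) (opvar 1) (Suc n) + (\<Sum>q\<le>n. opmul (Suc n) (oppow (Suc n) (opvar 1) q) (Et (Suc n) S (Suc n - q)))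
         = (0 :: 'a::comm_ring_1 opol)"
proof -
  let ?x = "opvar 1 :: 'a opol"
  let ?E = "Et (Suc n) S :: nat \<Rightarrow> 'a opol"
  let ?p = "oppow (Suc n) ?x"
  have "(\<Sum>q\<le>Suc n. opmul (Suc n) (?p q) (?E (Suc n - q))) = Et (Suc n) (S - {1}) (Suc n)"
    unfolding S_def by (rule T2)
  also have "Et (Suc n) (S - {1}) (Suc n) = (0 :: 'a opol)"
    by (rule Et_big) (auto simp: S_def)
  finally have z: "(\<Sum>q\<le>Suc n. opmul (Suc n) (?p q) (?E (Suc n - q))) = 0" .
  have "(\<Sum>q\<le>Suc n. opmul (Suc n) (?p q) (?E (Suc n - q))) = (\<Sum>q\<le>n. opmul (Suc n) (?p q) (?E (Suc n - q))) + ?p (Suc n)"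
    by (simp add: Et_0 S_def opone_right)
  with z show ?thesis by (simp add: add.commute)
qed

lemma P2:
  fixes n m :: nat
  defines "S \<equiv> {1..Suc n}"
  shows "oppow (Suc n) (opvar 1) (m + Suc n) + (\<Sum>q\<le>n. opmul (Suc n)
            (oppow (Suc n) (opvar 1) q)
            (\<Sum>r\<le>m. opmul (Suc n) (Et (Suc n) S (m + Suc n - q - r)) (Hg (Suc n) S r))) = (0 :: 'a::comm_ring_1 opol)"
proof (induct m)
  case 0
  show ?case using B2[of n, where 'a='a] by (simp add: Hg_0 opone_right S_def)
next
  case (Suc m)
  let ?N = "Suc n"
  let ?x = "opvar 1 :: 'a opol"
  let ?E = "Et (Suc n) S :: nat \<Rightarrow> 'a opol"
  let ?H = "Hg (Suc n) S :: nat \<Rightarrow> 'a opol"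
  let ?p = "oppow (Suc n) ?x"
  define C where "C = (\<lambda>m q. \<Sum>r\<le>m. opmul ?N (?E (m + Suc n - q - r)) (?H r))"
  define D where "D = (\<lambda>q. \<Sum>r\<le>m. opmul ?N (?E (Suc m + Suc n - q - r)) (?H r))"
  have SN: "S \<subseteq> {1..Suc n}" by (simp add: S_def)
  have fS: "finite S" "card S = Suc n" by (auto simp: S_def)
  have IH: "?p (m + Suc n) + (\<Sum>q\<le>n. opmul ?N (?p q) (C m q)) = 0"
    using Suc unfolding C_def .
  have a: "\<And>q. q \<le> n \<Longrightarrow> C (Suc m) q = D q + opmul ?N (?E (Suc n - q)) (?H (Suc m))"
    by (simp add: C_def D_def)
  have bsum: "(\<Sum>q\<le>n. opmul ?N (?p q) (C (Suc m) q)) =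
      (\<Sum>q\<le>n. opmul ?N (?p q) (D q)) + opmul ?N (\<Sum>q\<le>n. opmul ?N (?p q) (?E (Suc n - q))) (?H (Suc m))"
  proof -
    have "(\<Sum>q\<le>n. opmul ?N (?p q) (C (Suc m) q)) = (\<Sum>q\<le>n. opmul ?N (?p q) (D q) + opmul ?N (opmul ?N (?p q) (?E (Suc n - q))) (?H (Suc m)))"
      by (rule sum.cong) (simp_all add: a opmul_add_right opmul_assoc)
    then show ?thesis by (simp add: sum.distrib opmul_sum_left)
  qed
  have c: "(\<Sum>q\<le>n. opmul ?N (?p q) (?E (Suc n - q))) = - ?p (Suc n)"
    using B2[of n, where 'a='a] unfolding S_def add_eq_0_iff .
  have D0: "D 0 = 0"
    unfolding D_def by (rule sum.neutral) (auto simp: Et_big fS)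
  have DS: "\<And>q. D (Suc q) = C m q" by (simp add: C_def D_def)
  have d: "(\<Sum>q\<le>n. opmul ?N (?p q) (D q)) = (\<Sum>q<n. opmul ?N (?p (Suc q)) (C m q))"
  proof -
    have "(\<Sum>q\<le>n. opmul ?N (?p q) (D q)) = (\<Sum>q<Suc n. opmul ?N (?p q) (D q))"
      by (simp add: lessThan_Suc_atMost)
    also have "\<dots> = opmul ?N (?p 0) (D 0) + (\<Sum>q<n. opmul ?N (?p (Suc q)) (D (Suc q)))"
      by (rule sum.lessThan_Suc_shift)
    also have "\<dots> = (\<Sum>q<n. opmul ?N (?p (Suc q)) (C m q))"
      by (simp add: D0 DS)
    finally show ?thesis .
  qed
  have e: "C m n = - ?H (Suc m)"
  proof -
    have z: "(\<Sum>r\<le>Suc m. opmul ?N (?E (Suc m - r)) (?H r)) = 0" by (rule idB[OF SN])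
    have "(\<Sum>r\<le>Suc m. opmul ?N (?E (Suc m - r)) (?H r)) = C m n + ?H (Suc m)"
      by (simp add: C_def Et_0 fS opone_left)
    with z show ?thesis by (simp add: eq_neg_iff_add_eq_0)
  qed
  have f: "?p (Suc m + Suc n) = - ((\<Sum>q<n. opmul ?N (?p (Suc q)) (C m q)) + opmul ?N (?p (Suc n)) (C m n))"
  proof -
    have f1: "?p (Suc m + Suc n) = opmul ?N ?x (?p (m + Suc n))"
      by (simp add: oppow_Suc)
    have f2: "?p (m + Suc n) = - (\<Sum>q\<le>n. opmul ?N (?p q) (C m q))"
      using IH by (simp add: eq_neg_iff_add_eq_0)
    have f3: "opmul ?N ?x (- (\<Sum>q\<le>n. opmul ?N (?p q) (C m q))) = - (\<Sum>q\<le>n. opmul ?N (?p (Suc q)) (C m q))"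
      by (simp add: opmul_uminus_right opmul_sum_right opmul_assoc[symmetric] oppow_Suc)
    have f4: "(\<Sum>q\<le>n. opmul ?N (?p (Suc q)) (C m q)) = (\<Sum>q<n. opmul ?N (?p (Suc q)) (C m q)) + opmul ?N (?p (Suc n)) (C m n)"
      by (simp add: lessThan_Suc_atMost[symmetric])
    show ?thesis unfolding f1 f2 f3 f4 ..
  qed
  have "?p (Suc m + Suc n) + (\<Sum>q\<le>n. opmul ?N (?p q) (C (Suc m) q)) = 0"
    unfolding f bsum c d e by (simp add: opmul_uminus_left opmul_uminus_right)
  then show ?case unfolding C_def .
qed




theorem mainTheorem10:
  fixes n m :: nat
  assumes char: "(2::'a::field) \<noteq> 0"
  shows "oppow (n+1) (opvar (n+1) :: 'a opol) (m+n+1) =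
           - (\<Sum>q=0..n. opmul (n+1)
                (\<Sum>r=0..m. opscale ((-1) ^ (m+n+1-q-r))
                   (opmul (n+1) (op_h (n+1) r) (op_e (n+1) (m+n+1-q-r))))
                (oppow (n+1) (opvar (n+1)) q))
       \<and> oppow (n+1) (opvar 1 :: 'a opol) (m+n+1) =
           - (\<Sum>p=0..n. opmul (n+1) (oppow (n+1) (opvar 1) p)
                (\<Sum>s=0..m. opscale ((-1) ^ (m+n+1-p-s))
                   (opmul (n+1) (op_e (n+1) (m+n+1-p-s)) (op_h (n+1) s))))"
proof
  have h1: "(\<Sum>q=0..n. opmul (n+1)
                (\<Sum>r=0..m. opscale ((-1) ^ (m+n+1-q-r))
                   (opmul (n+1) (op_h (n+1) r) (op_e (n+1) (m+n+1-q-r))))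
                (oppow (n+1) (opvar (n+1)) q)) =
     (\<Sum>q\<le>n. opmul (Suc n) (\<Sum>r\<le>m. opmul (Suc n) (Hg (Suc n) {1..Suc n} r) (Et (Suc n) {1..Suc n} (m + Suc n - q - r)))
        (oppow (Suc n) (opvar (Suc n)) q) :: 'a opol)"
    by (simp add: atLeast0AtMost op_h_Hg op_e_Eg Et_def opmul_scale_right)
  have p1: "oppow (Suc n) (opvar (Suc n)) (m + Suc n) + (\<Sum>q\<le>n. opmul (Suc n) (\<Sum>r\<le>m. opmul (Suc n) (Hg (Suc n) {1..Suc n} r) (Et (Suc n) {1..Suc n} (m + Suc n - q - r)))
        (oppow (Suc n) (opvar (Suc n)) q)) = (0 :: 'a opol)"
    by (rule P1)
  show "oppow (n+1) (opvar (n+1) :: 'a opol) (m+n+1) =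
           - (\<Sum>q=0..n. opmul (n+1)
                (\<Sum>r=0..m. opscale ((-1) ^ (m+n+1-q-r))
                   (opmul (n+1) (op_h (n+1) r) (op_e (n+1) (m+n+1-q-r))))
                (oppow (n+1) (opvar (n+1)) q))"
    unfolding h1 using p1 by (simp add: eq_neg_iff_add_eq_0)
next
  have h2: "(\<Sum>p=0..n. opmul (n+1) (oppow (n+1) (opvar 1) p)
                (\<Sum>s=0..m. opscale ((-1) ^ (m+n+1-p-s))
                   (opmul (n+1) (op_e (n+1) (m+n+1-p-s)) (op_h (n+1) s)))) =
     (\<Sum>q\<le>n. opmul (Suc n) (oppow (Suc n) (opvar 1) q) (\<Sum>r\<le>m. opmul (Suc n) (Et (Suc n) {1..Suc n} (m + Suc n - q - r)) (Hg (Suc n) {1..Suc n} r)) :: 'a opol)"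
    by (simp add: atLeast0AtMost op_h_Hg op_e_Eg Et_def opmul_scale_left)
  have p2: "oppow (Suc n) (opvar 1) (m + Suc n) + (\<Sum>q\<le>n. opmul (Suc n) (oppow (Suc n) (opvar 1) q) (\<Sum>r\<le>m. opmul (Suc n) (Et (Suc n) {1..Suc n} (m + Suc n - q - r)) (Hg (Suc n) {1..Suc n} r))) = (0 :: 'a opol)"
    by (rule P2)
  show "oppow (n+1) (opvar 1 :: 'a opol) (m+n+1) =
           - (\<Sum>p=0..n. opmul (n+1) (oppow (n+1) (opvar 1) p)
                (\<Sum>s=0..m. opscale ((-1) ^ (m+n+1-p-s))
                   (opmul (n+1) (op_e (n+1) (m+n+1-p-s)) (op_h (n+1) s))))"
    unfolding h2 using p2 by (simp add: eq_neg_iff_add_eq_0)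
qed


end
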